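(* Let $\mathbf{M}\in\mathcal{M}_T(n)$ with $\mathbf{M}\neq 0$. Set $\sigma=\|\mathbf{M}\hat{\mathbf{1}}\|_2$ and $\hat{\mathbf{u}}=\mathbf{M}\hat{\mathbf{1}}/\|\mathbf{M}\hat{\mathbf{1}}\|_2$. Then $\hat{\mathbf{u}}$ and $\hat{\mathbf{1}}$ are orthonormal and $\mathbf{M}=\sigma\,(\hat{\mathbf{u}},-\hat{\mathbf{1}})(\hat{\mathbf{1}},\hat{\mathbf{u}})^\top$, which is a singular value decomposition of $\mathbf{M}$ with both nonzero singular values equal to $\sigma$.
   Context: $\hat{\mathbf{1}}=(1,\dots,1)^\top/\sqrt{n}\in\mathbb{R}^n$; $(\mathbf{a},\mathbf{b})$ denotes the $n\times 2$ matrix with columns $\mathbf{a},\mathbf{b}$. A TDOA matrix is an $n\times n$ real matrix whose $(i,j)$ entry is $\tau_i-\tau_j$ for some $(\tau_1,\dots,\tau_n)\in\mathbb{R}^n$; $\mathcal{M}_T(n)$ is the set of all $n\times n$ TDOA matrices. *)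

theory Defs
  imports "HOL-Analysis.Analysis"
begin

definition onehat :: "real ^ 'n" where
  "onehat = (\<chi> i. 1 / sqrt (real CARD('n)))"

definition TDOA_matrices :: "(real ^ 'n ^ 'n) set" where
  "TDOA_matrices = {M. \<exists>\<tau> :: real ^ 'n. \<forall>i j. M $ i $ j = \<tau> $ i - \<tau> $ j}"

definition cols2 :: "real ^ 'n \<Rightarrow> real ^ 'n \<Rightarrow> real ^ 2 ^ 'n" where
  "cols2 a b = (\<chi> i. \<chi> k. if k = 1 then a $ i else b $ i)"

end

theory Submission
  imports Defs
begin

theorem lemma1:
  fixes M :: "real ^ 'n ^ 'n"
  assumes "M \<in> TDOA_matrices" and "M \<noteq> 0"
  defines "\<sigma> \<equiv> norm (M *v onehat)"
      and "u \<equiv> (1 / norm (M *v onehat)) *\<^sub>R (M *v onehat)"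
  shows "norm u = 1 \<and> norm (onehat :: real ^ 'n) = 1 \<and> u \<bullet> onehat = 0
    \<and> M = \<sigma> *\<^sub>R (cols2 u (- onehat) ** transpose (cols2 onehat u))
    \<and> \<sigma> > 0
    \<and> transpose (cols2 u (- onehat)) ** cols2 u (- onehat) = mat 1
    \<and> transpose (cols2 onehat u) ** cols2 onehat u = mat 1"
proof -
  obtain \<tau> :: "real ^ 'n" where tau: "\<And>i j. M $ i $ j = \<tau> $ i - \<tau> $ j"
    using assms(1) unfolding TDOA_matrices_def by blast
  define N where "N = real CARD('n)"
  define s where "s = sqrt N"
  define T where "T = (\<Sum>j\<in>UNIV. \<tau> $ j)"
  have N0: "N > 0" unfolding N_def by simp
  have s0: "s > 0" unfolding s_def using N0 by simp
  have ss: "s * s = N" unfolding s_def using N0 by simp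
  have oh: "\<And>i. (onehat :: real ^ 'n) $ i = 1 / s" unfolding onehat_def s_def N_def by simp
  define v where "v = M *v onehat"
  have v: "\<And>i. v $ i = (N * \<tau> $ i - T) / s"
  proof -
    fix i
    have "v $ i = (\<Sum>j\<in>UNIV. (\<tau> $ i - \<tau> $ j) * (1 / s))"
      unfolding v_def matrix_vector_mult_def by (simp add: tau oh)
    also have "\<dots> = (\<Sum>j\<in>UNIV. (\<tau> $ i - \<tau> $ j)) / s"
      by (simp add: sum_divide_distrib)
    also have "(\<Sum>j\<in>UNIV. (\<tau> $ i - \<tau> $ j)) = N * \<tau> $ i - T"
      by (simp add: sum_subtractf T_def N_def)
    finally show "v $ i = (N * \<tau> $ i - T) / s" .
  qed
  have sig: "\<sigma> = norm v" unfolding \<sigma>_def v_def ..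
  have uv: "u = (1/\<sigma>) *\<^sub>R v" unfolding u_def \<sigma>_def v_def ..
  have vne: "v \<noteq> 0"
  proof
    assume "v = 0"
    then have "\<And>i. N * \<tau> $ i = T" using v s0 by (metis divide_eq_0_iff eq_iff_diff_eq_0 less_irrefl zero_index)
    then have "\<And>i j. \<tau> $ i = \<tau> $ j" using N0 by (metis mult_cancel_left less_irrefl)
    then have "M = 0" by (simp add: vec_eq_iff tau)
    with assms(2) show False by simp
  qed
  have sg0: "\<sigma> > 0" using vne sig by simp
  have nu: "norm u = 1" using sg0 sig uv by simp
  have ohoh: "(onehat :: real ^ 'n) \<bullet> onehat = 1"
    using ss N0 by (simp add: inner_vec_def oh N_def)
  have noh: "norm (onehat :: real ^ 'n) = 1" using ohoh by (simp add: norm_eq_sqrt_inner)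
  have voh: "v \<bullet> onehat = 0"
  proof -
    have "v \<bullet> onehat = (\<Sum>i\<in>UNIV. (N * \<tau> $ i - T) / s * (1/s))"
      by (simp add: inner_vec_def v oh)
    also have "\<dots> = (\<Sum>i\<in>UNIV. (N * \<tau> $ i - T)) / (s * s)"
      by (simp add: sum_divide_distrib)
    also have "(\<Sum>i\<in>UNIV. (N * \<tau> $ i - T)) = 0"
      by (simp add: sum_subtractf T_def N_def sum_distrib_left)
    finally show ?thesis by simp
  qed
  have uoh: "u \<bullet> onehat = 0" using voh uv by simp
  have uu: "u \<bullet> u = 1" using nu by (metis norm_eq_sqrt_inner real_sqrt_eq_1_iff)
  have ohu: "onehat \<bullet> u = 0" using uoh by (simp add: inner_commute)
  have dec: "M = \<sigma> *\<^sub>R (cols2 u (- onehat) ** transpose (cols2 onehat u))"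
  proof -
    have "\<And>i j. M $ i $ j = \<sigma> * (u $ i * (1/s) - (1/s) * u $ j)"
    proof -
      fix i j
      have "\<sigma> * (u $ i * (1/s) - (1/s) * u $ j) = (v $ i - v $ j) / s"
      proof -
        have "\<sigma> * (u $ i * (1/s) - (1/s) * u $ j) = (\<sigma> * u $ i - \<sigma> * u $ j) / s"
          by (simp add: algebra_simps diff_divide_distrib)
        moreover have "\<sigma> * u $ i = v $ i" "\<sigma> * u $ j = v $ j" using sg0 uv by auto
        ultimately show ?thesis by simp
      qed
      also have "\<dots> = (N * \<tau> $ i - N * \<tau> $ j) / (s * s)" using s0 by (simp add: v diff_divide_distrib[symmetric] divide_divide_eq_left)
      also have "\<dots> = \<tau> $ i - \<tau> $ j" using ss N0 by (simp add: field_simps)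
      finally show "M $ i $ j = \<sigma> * (u $ i * (1/s) - (1/s) * u $ j)" by (simp add: tau)
    qed
    then show ?thesis
      by (simp add: vec_eq_iff matrix_matrix_mult_def transpose_def cols2_def sum_2 oh)
  qed
  have o1: "transpose (cols2 u (- onehat)) ** cols2 u (- onehat) = mat 1"
    apply (simp add: vec_eq_iff forall_2 matrix_matrix_mult_def transpose_def cols2_def mat_def sum_negf)
    using uu ohoh uoh ohu unfolding inner_vec_def by simp
  have o2: "transpose (cols2 onehat u) ** cols2 onehat u = mat 1"
    apply (simp add: vec_eq_iff forall_2 matrix_matrix_mult_def transpose_def cols2_def mat_def)
    using uu ohoh uoh ohu unfolding inner_vec_def by simp
  show ?thesis using nu noh uoh dec sg0 o1 o2 by blast
qed

end
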